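(* Let $m\ge1$ and $l\ge1$ be integers. Then $D_{m,l}^{-1}B^*_{k,j}(t)\in\mathbb{Z}[t]$ for all $k,j=0,1,\dots,m$.
   Context: $v_p$ is the $p$-adic valuation. $D_{m,l}=\prod_{p\le (m+1)/2,\ p\text{ prime}}p^{\mu_p v_p((l-1)!)}$ where $\mu_p=\min_{0\le j\le m}\left(\lfloor j/p\rfloor+\lfloor (m-j)/p\rfloor\right)$. For $k=0,\dots,m$ let $l^{(k)}_h=l$ for $h\ne k$ and $l^{(k)}_k=l-1$, and $L=(m+1)l-1$. For $j,k\in\{0,\dots,m\}$ define $\sigma^{(k,j)}_i$ by $\prod_{h=0}^m(h-j-w)^{l^{(k)}_h}=\sum_{i=0}^L\sigma^{(k,j)}_iw^i$, and $B^*_{k,j}(t)=\frac{1}{(l-1)!}\sum_{i=0}^{L}t^{L-i}\,i!\,\sigma^{(k,j)}_i$. *)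

theory Defs
  imports "HOL-Computational_Algebra.Computational_Algebra"
begin

definition mu_exp :: "nat \<Rightarrow> nat \<Rightarrow> nat" where
  "mu_exp m p = Min {j div p + (m - j) div p | j. j \<le> m}"

definition D_ml :: "nat \<Rightarrow> nat \<Rightarrow> nat" where
  "D_ml m l = (\<Prod>p\<in>{p. prime p \<and> 2 * p \<le> m + 1}.
                  p ^ (mu_exp m p * multiplicity p (fact (l - 1) :: nat)))"

definition lk :: "nat \<Rightarrow> nat \<Rightarrow> nat \<Rightarrow> nat" where
  "lk l k h = (if h = k then l - 1 else l)"

definition sigma_poly :: "nat \<Rightarrow> nat \<Rightarrow> nat \<Rightarrow> nat \<Rightarrow> int poly" where
  "sigma_poly m l k j = (\<Prod>h\<in>{0..m}. [: int h - int j, -1 :] ^ lk l k h)"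

definition sigma :: "nat \<Rightarrow> nat \<Rightarrow> nat \<Rightarrow> nat \<Rightarrow> nat \<Rightarrow> int" where
  "sigma m l k j i = coeff (sigma_poly m l k j) i"

definition Lbig :: "nat \<Rightarrow> nat \<Rightarrow> nat" where
  "Lbig m l = (m + 1) * l - 1"

definition Bstar :: "nat \<Rightarrow> nat \<Rightarrow> nat \<Rightarrow> nat \<Rightarrow> rat poly" where
  "Bstar m l k j = smult (1 / fact (l - 1))
     (\<Sum>i\<in>{0..Lbig m l}. monom (fact i * of_int (sigma m l k j i)) (Lbig m l - i))"

end

theory Submission imports Defs begin


lemma fact_decomp:
  fixes p :: nat assumes "prime p"
  shows "\<exists>u. fact s = p ^ (s div p) * fact (s div p) * u \<and> \<not> p dvd u"
proof (induction s)
  case 0 then show ?case using assms by (intro exI[of _ 1]) auto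
next
  case (Suc s)
  then obtain u where u: "fact s = p ^ (s div p) * fact (s div p) * u" "\<not> p dvd u" by blast
  have p2: "p \<ge> 2" using assms prime_ge_2_nat by blast
  show ?case
  proof (cases "p dvd Suc s")
    case True
    then have d: "Suc s div p = Suc (s div p)"
      by (simp add: div_Suc)
    have "Suc s = p * Suc (s div p)" using True d by (metis dvd_mult_div_cancel)
    have "fact (Suc s) = Suc s * fact s" by simp
    also have "\<dots> = (p * Suc (s div p)) * (p ^ (s div p) * fact (s div p) * u)"
      using u \<open>Suc s = p * Suc (s div p)\<close> by simp
    also have "\<dots> = p ^ Suc (s div p) * (Suc (s div p) * fact (s div p)) * u"
      by (simp add: algebra_simps)
    also have "\<dots> = p ^ (Suc s div p) * fact (Suc s div p) * u"
      using d by (simp only: fact_Suc) simp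
    finally have "fact (Suc s) = p ^ (Suc s div p) * fact (Suc s div p) * u" .
    then show ?thesis using u by blast
  next
    case False
    then have d: "Suc s div p = s div p"
      by (simp add: div_Suc dvd_eq_mod_eq_0)
    have "fact (Suc s) = Suc s * fact s" by simp
    then have "fact (Suc s) = p ^ (Suc s div p) * fact (Suc s div p) * (u * Suc s)"
      using u d by (simp only: ) (simp add: algebra_simps)
    moreover have "\<not> p dvd u * Suc s" using False u assms prime_dvd_mult_iff by blast
    ultimately show ?thesis by blast
  qed
qed



lemma mult_fact_le:
  fixes p :: nat assumes "prime p"
  shows "multiplicity p (fact s :: nat) \<le> s"
proof (induction s rule: less_induct)
  case (less s)
  show ?case
  proof (cases "s = 0")
    case True then show ?thesis by simp
  next
    case False
    have p2: "p \<ge> 2" using assms prime_ge_2_nat by blast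
    obtain u where u: "fact s = p ^ (s div p) * fact (s div p) * u" "\<not> p dvd u"
      using fact_decomp[OF assms] by blast
    have u0: "u \<noteq> 0" using u(2) by (metis dvd_0_right)
    have "multiplicity p (fact s :: nat) = multiplicity p (p ^ (s div p) * fact (s div p) * u)"
      using u by simp
    also have "\<dots> = s div p + multiplicity p (fact (s div p) :: nat) + multiplicity p u"
      using assms u0 p2
      by (simp add: prime_elem_multiplicity_mult_distrib multiplicity_same_power)
    also have "multiplicity p u = 0" using u(2) by (simp add: not_dvd_imp_multiplicity_0)
    also have "s div p < s" using False p2 by simp
    then have "multiplicity p (fact (s div p) :: nat) \<le> s div p" using less by blast
    moreover have "2 * (s div p) \<le> p * (s div p)" using p2 by simp
    moreover have "p * (s div p) \<le> s" by simp
    ultimately show ?thesis by linarith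
  qed
qed

definition goodp :: "int \<Rightarrow> int poly \<Rightarrow> bool" where
  "goodp N P \<longleftrightarrow> (\<forall>i. N dvd fact i * coeff P i)"

lemma goodp_dvd: "M dvd N \<Longrightarrow> goodp N P \<Longrightarrow> goodp M P"
  unfolding goodp_def using dvd_trans by blast

lemma goodp_one: "goodp 1 1"
  unfolding goodp_def by auto

lemma goodp_mult:
  assumes "goodp N1 P" "goodp N2 Q" shows "goodp (N1 * N2) (P * Q)"
  unfolding goodp_def
proof
  fix i
  have "fact i * coeff (P * Q) i = (\<Sum>a\<le>i. fact i * (coeff P a * coeff Q (i - a)))"
    by (simp add: coeff_mult sum_distrib_left)
  also have "\<dots> = (\<Sum>a\<le>i. of_nat (i choose a) * (fact a * coeff P a) * (fact (i - a) * coeff Q (i - a)))"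
  proof (rule sum.cong)
    fix a assume "a \<in> {..i}"
    then have "fact a * fact (i - a) * (i choose a) = (fact i :: nat)"
      by (simp add: binomial_fact_lemma)
    then have "fact a * fact (i - a) * of_nat (i choose a) = (fact i :: int)"
      by (metis of_nat_fact of_nat_mult)
    then show "fact i * (coeff P a * coeff Q (i - a)) = of_nat (i choose a) * (fact a * coeff P a) * (fact (i - a) * coeff Q (i - a))"
      by (metis (no_types, lifting) mult.assoc mult.commute mult.left_commute)
  qed simp
  finally have eq: "fact i * coeff (P * Q) i = (\<Sum>a\<le>i. of_nat (i choose a) * (fact a * coeff P a) * (fact (i - a) * coeff Q (i - a)))" .
  show "N1 * N2 dvd fact i * coeff (P * Q) i"
    unfolding eq
  proof (rule dvd_sum)
    fix a
    have "N1 * N2 dvd (fact a * coeff P a) * (fact (i - a) * coeff Q (i - a))"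
      using assms unfolding goodp_def by (intro mult_dvd_mono) auto
    then show "N1 * N2 dvd of_nat (i choose a) * (fact a * coeff P a) * (fact (i - a) * coeff Q (i - a))"
      by (metis dvd_mult mult.assoc)
  qed
qed

lemma goodp_prod:
  assumes "finite A" "\<forall>h\<in>A. goodp (N h) (F h)"
  shows "goodp (\<Prod>h\<in>A. N h) (\<Prod>h\<in>A. F h)"
  using assms by (induction A rule: finite_induct) (auto simp: goodp_one goodp_mult)

lemma goodp_lin:
  assumes "\<forall>r\<le>n. N dvd fact r * of_nat (n choose r) * a ^ (n - r)"
  shows "goodp N ([:a, -1:] ^ n)"
  unfolding goodp_def
proof
  fix i
  show "N dvd fact i * coeff ([:a, -1:] ^ n) i"
  proof (cases "i \<le> n")
    case True
    then have "fact i * coeff ([:a, -1:] ^ n) i = (-1) ^ i * (fact i * of_nat (n choose i) * a ^ (n - i))"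
      by (simp add: coeff_linear_poly_power algebra_simps)
    then show ?thesis using assms True by (metis dvd_mult)
  next
    case False
    have "degree ([:a, -1:] ^ n) \<le> n"
      by (rule order.trans[OF degree_power_le]) simp
    then have "coeff ([:a, -1:] ^ n) i = 0" using False by (intro coeff_eq_0) simp
    then show ?thesis by simp
  qed
qed



lemma key_dvd:
  fixes p :: nat and a :: int
  assumes p: "prime p" and pa: "int p dvd a" and r: "r \<le> n"
  shows "int p ^ multiplicity p (fact n :: nat) dvd fact r * int (n choose r) * a ^ (n - r)"
proof -
  define X :: nat where "X = fact r * (n choose r)"
  define E where "E = multiplicity p (fact n :: nat)"
  define t where "t = multiplicity p (fact (n - r) :: nat)"
  have XF: "X * fact (n - r) = fact n"
    unfolding X_def using binomial_fact_lemma[OF r] by (simp add: algebra_simps)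
  have X0: "X \<noteq> 0" unfolding X_def using r by simp
  have "E = multiplicity p X + t"
    unfolding E_def t_def XF[symmetric]
    using p X0 by (simp add: prime_elem_multiplicity_mult_distrib)
  then have "p ^ E = p ^ multiplicity p X * p ^ t" by (simp add: power_add)
  also have "\<dots> dvd X * p ^ t" by (simp add: multiplicity_dvd)
  finally have d1: "int p ^ E dvd int X * int p ^ t"
    by (metis of_nat_dvd_iff of_nat_mult of_nat_power)
  have "t \<le> n - r" unfolding t_def using mult_fact_le[OF p] .
  then have "int p ^ t dvd int p ^ (n - r)" by (rule le_imp_power_dvd)
  also have "\<dots> dvd a ^ (n - r)" using pa by (rule dvd_power_same)
  finally have "int X * int p ^ t dvd int X * a ^ (n - r)" by simp
  with d1 have "int p ^ E dvd int X * a ^ (n - r)" by (rule dvd_trans)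
  moreover have "int X = fact r * int (n choose r)" unfolding X_def by simp
  ultimately show ?thesis unfolding E_def by simp
qed

lemma card_lower:
  fixes p j m :: nat
  assumes p: "p > 0" and j: "j \<le> m"
  shows "j div p + (m - j) div p \<le> card {h\<in>{0..m}. h \<noteq> j \<and> int p dvd int h - int j}"
proof -
  define A where "A = {h\<in>{0..m}. h \<noteq> j \<and> int p dvd int h - int j}"
  define B1 where "B1 = (\<lambda>t. j - p * t) ` {1..j div p}"
  define B2 where "B2 = (\<lambda>t. j + p * t) ` {1..(m - j) div p}"
  have c1: "card B1 = j div p"
    unfolding B1_def
  proof (subst card_image)
    show "inj_on (\<lambda>t. j - p * t) {1..j div p}"
    proof (rule inj_onI)
      fix x y assume "x \<in> {1..j div p}" "y \<in> {1..j div p}" "j - p * x = j - p * y"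
      moreover have "p * x \<le> j" "p * y \<le> j" using calculation
        by (meson atLeastAtMost_iff order.trans mult_le_mono2 times_div_less_eq_dividend)+
      ultimately have "p * x = p * y" by linarith
      then show "x = y" using p by simp
    qed
  qed simp
  have c2: "card B2 = (m - j) div p"
    unfolding B2_def by (subst card_image) (auto simp: inj_on_def p)
  have sub: "B1 \<union> B2 \<subseteq> A"
  proof
    fix h assume "h \<in> B1 \<union> B2"
    then show "h \<in> A"
    proof
      assume "h \<in> B1"
      then obtain t where t: "t \<in> {1..j div p}" "h = j - p * t" unfolding B1_def by blast
      have "p * t \<le> p * (j div p)" using t by simp
      also have "\<dots> \<le> j" by simp
      finally have le: "p * t \<le> j" .
      have "p * t > 0" using t p by simp
      then have "h \<noteq> j" "h \<le> m" using t(2) le j by arith+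
      moreover have "int h - int j = int p * (- int t)" using t le by (simp add: of_nat_diff algebra_simps)
      ultimately show ?thesis unfolding A_def by auto
    next
      assume "h \<in> B2"
      then obtain t where t: "t \<in> {1..(m - j) div p}" "h = j + p * t" unfolding B2_def by blast
      have "p * t \<le> p * ((m - j) div p)" using t by simp
      also have "\<dots> \<le> m - j" by simp
      finally have le: "p * t \<le> m - j" .
      have "p * t > 0" using t p by simp
      then have "h \<noteq> j" "h \<le> m" using t le j by auto
      moreover have "int h - int j = int p * int t" using t by simp
      ultimately show ?thesis unfolding A_def by auto
    qed
  qed
  have lt1: "h < j" if hB: "h \<in> B1" for h
  proof -
    obtain t where t: "t \<in> {1..j div p}" "h = j - p * t" using hB unfolding B1_def by blast
    have "p * t \<le> p * (j div p)" using t by simp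
    also have "\<dots> \<le> j" by simp
    finally have le: "p * t \<le> j" .
    have "p * t > 0" using t p by simp
    then show ?thesis using t(2) le by arith
  qed
  have gt2: "h > j" if "h \<in> B2" for h
    using that p unfolding B2_def by auto
  have disj: "B1 \<inter> B2 = {}" using lt1 gt2 by force
  have "card (B1 \<union> B2) = j div p + (m - j) div p"
    using c1 c2 disj unfolding B1_def B2_def by (subst card_Un_disjoint) auto
  moreover have "card (B1 \<union> B2) \<le> card A"
    using sub unfolding A_def by (intro card_mono) auto
  ultimately show ?thesis unfolding A_def by simp
qed



lemma mu_le:
  fixes p :: nat assumes "j \<le> m"
  shows "mu_exp m p \<le> j div p + (m - j) div p"
proof -
  have eq: "{j div p + (m - j) div p | j. j \<le> m} = (\<lambda>j. j div p + (m - j) div p) ` {..m}"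
    by auto
  show ?thesis unfolding mu_exp_def eq
    using assms by (intro Min_le) auto
qed

lemma prime_part:
  fixes p m l k j :: nat
  assumes p: "prime p" and j: "j \<le> m" and l: "l \<ge> 1"
  shows "goodp (fact (l - 1) * int p ^ (mu_exp m p * multiplicity p (fact (l - 1) :: nat)))
           (sigma_poly m l k j)"
proof -
  define V where "V = multiplicity p (fact (l - 1) :: nat)"
  define A where "A = {h\<in>{0..m}. h \<noteq> j \<and> int p dvd int h - int j}"
  define N where "N h = (if h = j then fact (l - 1) else if h \<in> A then int p ^ V else (1::int))" for h
  define F where "F h = [:int h - int j, -1:] ^ lk l k h" for h
  have lk_ge: "lk l k h \<ge> l - 1" for h unfolding lk_def by auto
  have good: "\<forall>h\<in>{0..m}. goodp (N h) (F h)"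
  proof
    fix h assume h: "h \<in> {0..m}"
    show "goodp (N h) (F h)"
    proof (cases "h = j")
      case True
      then have NF: "N h = fact (l - 1)" "F h = [:0, -1:] ^ lk l k h"
        unfolding N_def F_def by auto
      show ?thesis unfolding NF
      proof (rule goodp_lin, intro allI impI)
        fix r assume r: "r \<le> lk l k h"
        show "fact (l - 1) dvd fact r * int (lk l k h choose r) * (0::int) ^ (lk l k h - r)"
        proof (cases "r = lk l k h")
          case True
          have "(fact (l - 1) :: int) dvd fact r" using True lk_ge[of h] by (intro fact_dvd) simp
          then show ?thesis using True by simp
        next
          case False
          then have "lk l k h - r \<noteq> 0" using r by simp
          then have z: "(0::int) ^ (lk l k h - r) = 0" by (simp add: zero_power)
          show ?thesis by (simp only: z mult_zero_right dvd_0_right)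
        qed
      qed
    next
      case False
      show ?thesis
      proof (cases "h \<in> A")
        case True
        then have NF: "N h = int p ^ V" "F h = [:int h - int j, -1:] ^ lk l k h"
          unfolding N_def F_def using False by auto
        have pa: "int p dvd int h - int j" using True unfolding A_def by auto
        have "V \<le> multiplicity p (fact (lk l k h) :: nat)"
          unfolding V_def using lk_ge[of h]
          by (intro dvd_imp_multiplicity_le fact_dvd) auto
        then have vd: "int p ^ V dvd int p ^ multiplicity p (fact (lk l k h) :: nat)"
          by (rule le_imp_power_dvd)
        show ?thesis unfolding NF
          by (rule goodp_lin, intro allI impI, rule dvd_trans[OF vd key_dvd[OF p pa]])
      next
        case False2: False
        then have "N h = 1" unfolding N_def using False by auto
        then show ?thesis unfolding goodp_def by simp
      qed
    qed
  qed
  have gp: "goodp (\<Prod>h\<in>{0..m}. N h) (sigma_poly m l k j)"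
    using goodp_prod[OF _ good] unfolding sigma_poly_def F_def by simp
  have fA: "finite A" unfolding A_def by auto
  have "(\<Prod>h\<in>{0..m}. N h) = N j * (\<Prod>h\<in>{0..m} - {j}. N h)"
    using j by (subst prod.remove[of _ j]) auto
  also have "(\<Prod>h\<in>{0..m} - {j}. N h) = (\<Prod>h\<in>A. N h)"
    by (rule prod.mono_neutral_right) (auto simp: A_def N_def)
  also have "(\<Prod>h\<in>A. N h) = (\<Prod>h\<in>A. int p ^ V)"
    by (rule prod.cong) (auto simp: A_def N_def)
  also have "\<dots> = int p ^ (V * card A)" by (simp add: power_mult[symmetric] mult.commute)
  finally have prodN: "(\<Prod>h\<in>{0..m}. N h) = fact (l - 1) * int p ^ (V * card A)"
    unfolding N_def by simp
  have "mu_exp m p \<le> card A"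
    using mu_le[OF j, of p] card_lower[of p j m] j prime_gt_0_nat[OF p] unfolding A_def by linarith
  then have "mu_exp m p * V \<le> V * card A" by simp
  then have "int p ^ (mu_exp m p * V) dvd int p ^ (V * card A)" by (rule le_imp_power_dvd)
  then have "fact (l - 1) * int p ^ (mu_exp m p * V) dvd (\<Prod>h\<in>{0..m}. N h)"
    unfolding prodN by (rule mult_dvd_mono[OF dvd_refl])
  then show ?thesis using gp goodp_dvd unfolding V_def by blast
qed



lemma prod_primes_dvd:
  fixes y :: int
  assumes "finite S" "\<forall>p\<in>S. prime p" "\<forall>p\<in>S. int p ^ e p dvd y"
  shows "(\<Prod>p\<in>S. int p ^ e p) dvd y"
  using assms
proof (induction S rule: finite_induct)
  case empty then show ?case by simp
next
  case (insert q S)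
  have cop: "coprime (int q ^ e q) (\<Prod>p\<in>S. int p ^ e p)"
  proof (rule prod_coprime_right)
    fix p assume "p \<in> S"
    then have "coprime q p" using insert by (intro primes_coprime) auto
    then show "coprime (int q ^ e q) (int p ^ e p)" by simp
  qed
  show ?case using insert cop by (simp add: divides_mult)
qed

lemma all_dvd:
  fixes m l k j :: nat
  assumes j: "j \<le> m" and l: "l \<ge> 1"
  shows "int (D_ml m l) * fact (l - 1) dvd fact i * sigma m l k j i"
proof -
  define S where "S = {p. prime p \<and> 2 * p \<le> m + 1}"
  define e where "e p = mu_exp m p * multiplicity p (fact (l - 1) :: nat)" for p
  define c where "c = fact i * sigma m l k j i"
  have fS: "finite S" unfolding S_def by (rule finite_subset[of _ "{..m+1}"]) auto
  have "fact (l - 1) dvd c"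
    using prime_part[OF two_is_prime_nat j l, of k] unfolding goodp_def c_def sigma_def
    by (meson dvd_mult_left)
  then obtain y where y: "c = fact (l - 1) * y" by blast
  have "\<forall>p\<in>S. int p ^ e p dvd y"
  proof
    fix p assume "p \<in> S"
    then have "prime p" unfolding S_def by auto
    then have "fact (l - 1) * int p ^ e p dvd fact (l - 1) * y"
      using prime_part[OF _ j l, of p k] y unfolding goodp_def c_def sigma_def e_def by metis
    then show "int p ^ e p dvd y" by simp
  qed
  then have "(\<Prod>p\<in>S. int p ^ e p) dvd y"
    using fS by (intro prod_primes_dvd) (auto simp: S_def)
  moreover have "int (D_ml m l) = (\<Prod>p\<in>S. int p ^ e p)"
    unfolding D_ml_def S_def e_def by simp
  ultimately show ?thesis using y unfolding c_def by (simp add: mult.commute)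
qed

lemma D_pos: "D_ml m l > 0"
  unfolding D_ml_def by (intro prod_pos) (auto simp: prime_gt_0_nat)

theorem corollary6p3:
  fixes m l :: nat
  assumes "m \<ge> 1" and "l \<ge> 1"
  shows "\<forall>k\<in>{0..m}. \<forall>j\<in>{0..m}. \<forall>n.
           coeff (smult (1 / of_nat (D_ml m l)) (Bstar m l k j)) n \<in> \<int>"
proof (intro ballI allI)
  fix k j n assume k: "k \<in> {0..m}" and j: "j \<in> {0..m}"
  define L where "L = Lbig m l"
  define c where "c i = fact i * sigma m l k j i" for i
  have cq: "(fact i * of_int (sigma m l k j i) :: rat) = of_int (c i)" for i
    unfolding c_def by simp
  have sum_eq: "(\<Sum>i\<in>{0..L}. coeff (monom (fact i * of_int (sigma m l k j i) :: rat) (L - i)) n)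
      = (if n \<le> L then of_int (c (L - n)) else 0)"
  proof (cases "n \<le> L")
    case True
    have "(\<Sum>i\<in>{0..L}. coeff (monom (fact i * of_int (sigma m l k j i) :: rat) (L - i)) n)
        = (\<Sum>i\<in>{0..L}. if i = L - n then of_int (c i) else 0)"
      by (rule sum.cong) (use True in \<open>auto simp: coeff_monom cq\<close>)
    also have "\<dots> = of_int (c (L - n))" by (simp add: sum.delta)
    finally show ?thesis using True by simp
  next
    case False
    then show ?thesis by (intro trans[OF sum.neutral]) (auto simp: coeff_monom)
  qed
  have D0: "(of_nat (D_ml m l) :: rat) \<noteq> 0" using D_pos[of m l] by simp
  show "coeff (smult (1 / of_nat (D_ml m l)) (Bstar m l k j)) n \<in> \<int>"
  proof (cases "n \<le> L")
    case False
    then show ?thesis unfolding Bstar_def L_def[symmetric]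
      by (simp add: coeff_sum sum_eq del: coeff_monom)
  next
    case True
    obtain z where z: "c (L - n) = int (D_ml m l) * fact (l - 1) * z"
      using all_dvd[of j m l "L - n" k] j assms unfolding c_def by (auto elim: dvdE)
    have "coeff (smult (1 / of_nat (D_ml m l)) (Bstar m l k j)) n
        = 1 / of_nat (D_ml m l) * (1 / fact (l - 1) * of_int (c (L - n)))"
      unfolding Bstar_def L_def[symmetric] using True
      by (simp add: coeff_sum sum_eq del: coeff_monom)
    also have "\<dots> = of_int z" using D0 unfolding z by (simp add: field_simps)
    finally show ?thesis by simp
  qed
qed


end
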